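(* Let $C$ be a Reedy category, let $\Gamma$ be one of $\int N(C)$, $\int N^{-,+}(C)$, $\int N^{--,+}_+(C)$, and let $(\alpha,\theta),(\alpha',\theta')\colon([m],X)\to([n],Y)$ be parallel morphisms in $\Gamma$. The following are equivalent: (1) $(\alpha,\theta)$ and $(\alpha',\theta')$ are equivalent; (2) $(\alpha,\theta)$ and $(\alpha',\theta')$ have a common upper bound in $\mathrm{Hom}_\Gamma(([m],X),([n],Y))$; (3) the largest element of $\{\psi:(\alpha,\theta)\le\psi\}$ coincides with the largest element of $\{\psi:(\alpha',\theta')\le\psi\}$ (these largest elements exist).
   Context: A Reedy category $(C,C_-,C_+)$: wide subcategories with unique factorization of every morphism as ($C_-$ then $C_+$), membership in $C_\pm$ decidable, and the relation ($x<'y$ iff non-identity $x\to y$ in $C_+$ or non-identity $y\to x$ in $C_-$) well-founded. $\Delta$: finite ordinals $[n]$ and order-preserving maps. $\int N(C)$: objects $([n],X)$ with $X\colon[n]\to C$ a functor; morphisms $([m],X)\to([n],Y)$ are $(\alpha,\theta)$, $\alpha\colon[m]\to[n]$ in $\Delta$, $\theta\colon X\Rightarrow Y\circ\alpha$; composition $(\beta,\varphi)\circ(\alpha,\theta)=(\beta\alpha,(\varphi\alpha)\circ\theta)$. $\int N^{-,+}(C)$: subcategory of objects with $X$ sending all morphisms into $C_-$ and morphisms with all $\theta_i\in C_+$. $\int N^{--,+}_+(C)$: its subcategory of objects whose $X$ reflects identities and morphisms with $\alpha$ injective. Order on hom-sets: $(\alpha,\theta)\le(\alpha',\theta')$ iff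 $\alpha\le\alpha'$ pointwise and $\theta'_i=Y(\alpha(i)\le\alpha'(i))\circ\theta_i$ for all $i$. Two parallel morphisms are equivalent if related by the equivalence relation (symmetric transitive closure) generated by $\le$ on the hom-set. *)

theory Defs
  imports Main
begin

record ('o, 'm) cat =
  Obj  :: "'o set"
  Arr  :: "'m set"
  Dom  :: "'m \<Rightarrow> 'o"
  Cod  :: "'m \<Rightarrow> 'o"
  Id   :: "'o \<Rightarrow> 'm"
  Comp :: "'m \<Rightarrow> 'm \<Rightarrow> 'm"   (* Comp C g f = g \<circ> f *)

definition category :: "('o, 'm) cat \<Rightarrow> bool" where
  "category C \<longleftrightarrow>
     (\<forall>f\<in>Arr C. Dom C f \<in> Obj C \<and> Cod C f \<in> Obj C) \<and>
     (\<forall>x\<in>Obj C. Id C x \<in> Arr C \<and> Dom C (Id C x) = x \<and> Cod C (Id C x) = x) \<and>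
     (\<forall>f\<in>Arr C. \<forall>g\<in>Arr C. Cod C f = Dom C g \<longrightarrow>
        Comp C g f \<in> Arr C \<and> Dom C (Comp C g f) = Dom C f \<and> Cod C (Comp C g f) = Cod C g) \<and>
     (\<forall>f\<in>Arr C. Comp C (Id C (Cod C f)) f = f \<and> Comp C f (Id C (Dom C f)) = f) \<and>
     (\<forall>f\<in>Arr C. \<forall>g\<in>Arr C. \<forall>h\<in>Arr C. Cod C f = Dom C g \<and> Cod C g = Dom C h \<longrightarrow>
        Comp C h (Comp C g f) = Comp C (Comp C h g) f)"

definition wide_subcat :: "('o, 'm) cat \<Rightarrow> 'm set \<Rightarrow> bool" where
  "wide_subcat C S \<longleftrightarrow> S \<subseteq> Arr C \<and> (\<forall>x\<in>Obj C. Id C x \<in> S) \<and>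
     (\<forall>f\<in>S. \<forall>g\<in>S. Cod C f = Dom C g \<longrightarrow> Comp C g f \<in> S)"

definition reedy_rel :: "('o, 'm) cat \<Rightarrow> 'm set \<Rightarrow> 'm set \<Rightarrow> ('o \<times> 'o) set" where
  "reedy_rel C Cm Cp = {(x, y). x \<in> Obj C \<and> y \<in> Obj C \<and>
     ((\<exists>f\<in>Cp. Dom C f = x \<and> Cod C f = y \<and> f \<noteq> Id C x) \<or>
      (\<exists>f\<in>Cm. Dom C f = y \<and> Cod C f = x \<and> f \<noteq> Id C y))}"

text \<open>Reedy category (C, C_-, C_+). Decidability of membership is automatic in HOL.\<close>
definition reedy :: "('o, 'm) cat \<Rightarrow> 'm set \<Rightarrow> 'm set \<Rightarrow> bool" where
  "reedy C Cm Cp \<longleftrightarrow> category C \<and> wide_subcat C Cm \<and> wide_subcat C Cp \<and>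
     (\<forall>f\<in>Arr C. \<exists>!pq. fst pq \<in> Cm \<and> snd pq \<in> Cp \<and> Cod C (fst pq) = Dom C (snd pq) \<and>
                      Comp C (snd pq) (fst pq) = f) \<and>
     wf (reedy_rel C Cm Cp)"

text \<open>A functor X : [n] \<rightarrow> C is encoded by X i j = X(i \<le> j) for i \<le> j \<le> n
  (and undefined elsewhere); the object X(i) is Dom C (X i i).\<close>
definition nobj :: "('o, 'm) cat \<Rightarrow> (nat \<Rightarrow> nat \<Rightarrow> 'm) \<Rightarrow> nat \<Rightarrow> 'o" where
  "nobj C X i = Dom C (X i i)"

definition nerve_obj :: "('o, 'm) cat \<Rightarrow> nat \<Rightarrow> (nat \<Rightarrow> nat \<Rightarrow> 'm) \<Rightarrow> bool" where
  "nerve_obj C n X \<longleftrightarrow>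
     (\<forall>i j. i \<le> j \<and> j \<le> n \<longrightarrow> X i j \<in> Arr C \<and> Dom C (X i j) = nobj C X i \<and>
                                   Cod C (X i j) = nobj C X j) \<and>
     (\<forall>i\<le>n. nobj C X i \<in> Obj C \<and> X i i = Id C (nobj C X i)) \<and>
     (\<forall>i j k. i \<le> j \<and> j \<le> k \<and> k \<le> n \<longrightarrow> X i k = Comp C (X j k) (X i j)) \<and>
     (\<forall>i j. \<not> (i \<le> j \<and> j \<le> n) \<longrightarrow> X i j = undefined)"

text \<open>Which of the three categories Gamma is meant:
  IntN = \<integral>N(C), IntNmp = \<integral>N^{-,+}(C), IntNmmp = \<integral>N^{--,+}_+(C).\<close>
datatype gamma = IntN | IntNmp | IntNmmp

definition gamma_obj :: "gamma \<Rightarrow> ('o, 'm) cat \<Rightarrow> 'm set \<Rightarrow> 'm set \<Rightarrow>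
    nat \<times> (nat \<Rightarrow> nat \<Rightarrow> 'm) \<Rightarrow> bool" where
  "gamma_obj G C Cm Cp nX \<longleftrightarrow> (case nX of (n, X) \<Rightarrow>
     nerve_obj C n X \<and>
     (G \<noteq> IntN \<longrightarrow> (\<forall>i j. i \<le> j \<and> j \<le> n \<longrightarrow> X i j \<in> Cm)) \<and>
     (G = IntNmmp \<longrightarrow> (\<forall>i j. i \<le> j \<and> j \<le> n \<and> X i j = Id C (nobj C X i) \<longrightarrow> i = j)))"

text \<open>Morphisms (alpha, theta) : ([m],X) \<rightarrow> ([n],Y); alpha and theta are
  extended by undefined outside {0..m}.\<close>
definition gamma_hom :: "gamma \<Rightarrow> ('o, 'm) cat \<Rightarrow> 'm set \<Rightarrow> 'm set \<Rightarrow>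
    nat \<times> (nat \<Rightarrow> nat \<Rightarrow> 'm) \<Rightarrow> nat \<times> (nat \<Rightarrow> nat \<Rightarrow> 'm) \<Rightarrow>
    ((nat \<Rightarrow> nat) \<times> (nat \<Rightarrow> 'm)) set" where
  "gamma_hom G C Cm Cp mX nY = (case mX of (m, X) \<Rightarrow> case nY of (n, Y) \<Rightarrow>
     {(\<alpha>, \<theta>). gamma_obj G C Cm Cp (m, X) \<and> gamma_obj G C Cm Cp (n, Y) \<and>
        (\<forall>i\<le>m. \<alpha> i \<le> n) \<and>
        (\<forall>i j. i \<le> j \<and> j \<le> m \<longrightarrow> \<alpha> i \<le> \<alpha> j) \<and>
        (\<forall>i>m. \<alpha> i = undefined \<and> \<theta> i = undefined) \<and>
        (\<forall>i\<le>m. \<theta> i \<in> Arr C \<and> Dom C (\<theta> i) = nobj C X i \<and> Cod C (\<theta> i) = nobj C Y (\<alpha> i)) \<and>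
        (\<forall>i j. i \<le> j \<and> j \<le> m \<longrightarrow>
            Comp C (\<theta> j) (X i j) = Comp C (Y (\<alpha> i) (\<alpha> j)) (\<theta> i)) \<and>
        (G \<noteq> IntN \<longrightarrow> (\<forall>i\<le>m. \<theta> i \<in> Cp)) \<and>
        (G = IntNmmp \<longrightarrow> inj_on \<alpha> {0..m})})"

definition hom_le :: "('o, 'm) cat \<Rightarrow> nat \<Rightarrow> (nat \<Rightarrow> nat \<Rightarrow> 'm) \<Rightarrow>
    (nat \<Rightarrow> nat) \<times> (nat \<Rightarrow> 'm) \<Rightarrow> (nat \<Rightarrow> nat) \<times> (nat \<Rightarrow> 'm) \<Rightarrow> bool" where
  "hom_le C m Y f g \<longleftrightarrow> (case f of (\<alpha>, \<theta>) \<Rightarrow> case g of (\<alpha>', \<theta>') \<Rightarrow>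
     (\<forall>i\<le>m. \<alpha> i \<le> \<alpha>' i \<and> \<theta>' i = Comp C (Y (\<alpha> i) (\<alpha>' i)) (\<theta> i)))"

definition hom_equiv where
  "hom_equiv C m Y H = equivclp (\<lambda>g h. g \<in> H \<and> h \<in> H \<and> hom_le C m Y g h)"

definition common_ub where
  "common_ub C m Y H f f' \<longleftrightarrow> (\<exists>g\<in>H. hom_le C m Y f g \<and> hom_le C m Y f' g)"

definition is_largest_above where
  "is_largest_above C m Y H f g \<longleftrightarrow> g \<in> H \<and> hom_le C m Y f g \<and>
     (\<forall>\<psi>\<in>H. hom_le C m Y f \<psi> \<longrightarrow> hom_le C m Y \<psi> g)"

definition largest_above where
  "largest_above C m Y H f = (THE g. is_largest_above C m Y H f g)"

end

theory Submission
  imports Defs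
begin

locale reedy_loc =
  fixes C :: "('o, 'm) cat" and Cm Cp :: "'m set"
  assumes R: "reedy C Cm Cp"
begin

lemma cat: "category C" using R reedy_def by auto

lemma catD1: "\<forall>f\<in>Arr C. Dom C f \<in> Obj C \<and> Cod C f \<in> Obj C"
  using cat unfolding category_def by (elim conjE) assumption
lemma catD2: "\<forall>x\<in>Obj C. Id C x \<in> Arr C \<and> Dom C (Id C x) = x \<and> Cod C (Id C x) = x"
  using cat unfolding category_def by (elim conjE) assumption
lemma catD3: "\<forall>f\<in>Arr C. \<forall>g\<in>Arr C. Cod C f = Dom C g \<longrightarrow>
        Comp C g f \<in> Arr C \<and> Dom C (Comp C g f) = Dom C f \<and> Cod C (Comp C g f) = Cod C g"
  using cat unfolding category_def by (elim conjE) assumption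
lemma catD4: "\<forall>f\<in>Arr C. Comp C (Id C (Cod C f)) f = f \<and> Comp C f (Id C (Dom C f)) = f"
  using cat unfolding category_def by (elim conjE) assumption
lemma catD5: "\<forall>f\<in>Arr C. \<forall>g\<in>Arr C. \<forall>h\<in>Arr C. Cod C f = Dom C g \<and> Cod C g = Dom C h \<longrightarrow>
        Comp C h (Comp C g f) = Comp C (Comp C h g) f"
  using cat unfolding category_def by (elim conjE) assumption
lemmas catD = catD1 catD2 catD3 catD4 catD5

lemma arr_dom: "f \<in> Arr C \<Longrightarrow> Dom C f \<in> Obj C" using catD1 by blast
lemma arr_cod: "f \<in> Arr C \<Longrightarrow> Cod C f \<in> Obj C" using catD1 by blast
lemma id_arr: "x \<in> Obj C \<Longrightarrow> Id C x \<in> Arr C" using catD2 by blast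
lemma id_dom[simp]: "x \<in> Obj C \<Longrightarrow> Dom C (Id C x) = x" using catD2 by blast
lemma id_cod[simp]: "x \<in> Obj C \<Longrightarrow> Cod C (Id C x) = x" using catD2 by blast
lemma comp_arr: "f \<in> Arr C \<Longrightarrow> g \<in> Arr C \<Longrightarrow> Cod C f = Dom C g \<Longrightarrow> Comp C g f \<in> Arr C"
  using catD3 by blast
lemma comp_dom: "f \<in> Arr C \<Longrightarrow> g \<in> Arr C \<Longrightarrow> Cod C f = Dom C g \<Longrightarrow> Dom C (Comp C g f) = Dom C f"
  using catD3 by blast
lemma comp_cod: "f \<in> Arr C \<Longrightarrow> g \<in> Arr C \<Longrightarrow> Cod C f = Dom C g \<Longrightarrow> Cod C (Comp C g f) = Cod C g"
  using catD3 by blast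
lemma idl: "f \<in> Arr C \<Longrightarrow> y = Cod C f \<Longrightarrow> Comp C (Id C y) f = f"
  using catD4 by blast
lemma idr: "f \<in> Arr C \<Longrightarrow> x = Dom C f \<Longrightarrow> Comp C f (Id C x) = f"
  using catD4 by blast
lemma assoc: "f \<in> Arr C \<Longrightarrow> g \<in> Arr C \<Longrightarrow> h \<in> Arr C \<Longrightarrow> Cod C f = Dom C g \<Longrightarrow> Cod C g = Dom C h \<Longrightarrow>
    Comp C h (Comp C g f) = Comp C (Comp C h g) f"
  using catD5 by blast

lemma wCm: "wide_subcat C Cm" using R reedy_def by auto
lemma wCp: "wide_subcat C Cp" using R reedy_def by auto
lemma Cm_arr: "f \<in> Cm \<Longrightarrow> f \<in> Arr C" using wCm unfolding wide_subcat_def by blast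
lemma Cp_arr: "f \<in> Cp \<Longrightarrow> f \<in> Arr C" using wCp unfolding wide_subcat_def by blast
lemma Cm_id: "x \<in> Obj C \<Longrightarrow> Id C x \<in> Cm" using wCm unfolding wide_subcat_def by blast
lemma Cp_id: "x \<in> Obj C \<Longrightarrow> Id C x \<in> Cp" using wCp unfolding wide_subcat_def by blast
lemma Cm_comp: "f \<in> Cm \<Longrightarrow> g \<in> Cm \<Longrightarrow> Cod C f = Dom C g \<Longrightarrow> Comp C g f \<in> Cm"
  using wCm unfolding wide_subcat_def by blast

lemma factD: "\<forall>f\<in>Arr C. \<exists>!pq. fst pq \<in> Cm \<and> snd pq \<in> Cp \<and> Cod C (fst pq) = Dom C (snd pq) \<and>
                      Comp C (snd pq) (fst pq) = f"
  using R unfolding reedy_def by (elim conjE) assumption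

lemma fact_ex: "f \<in> Arr C \<Longrightarrow> \<exists>q p. q \<in> Cm \<and> p \<in> Cp \<and> Cod C q = Dom C p \<and> Comp C p q = f"
proof -
  assume "f \<in> Arr C"
  then obtain pq where "fst pq \<in> Cm \<and> snd pq \<in> Cp \<and> Cod C (fst pq) = Dom C (snd pq) \<and>
                      Comp C (snd pq) (fst pq) = f" using factD by blast
  then show ?thesis by blast
qed

lemma fact_uniq: "f \<in> Arr C \<Longrightarrow> q \<in> Cm \<Longrightarrow> p \<in> Cp \<Longrightarrow> Cod C q = Dom C p \<Longrightarrow> Comp C p q = f \<Longrightarrow>
   q' \<in> Cm \<Longrightarrow> p' \<in> Cp \<Longrightarrow> Cod C q' = Dom C p' \<Longrightarrow> Comp C p' q' = f \<Longrightarrow> q = q' \<and> p = p'"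
proof -
  assume a: "f \<in> Arr C" "q \<in> Cm" "p \<in> Cp" "Cod C q = Dom C p" "Comp C p q = f"
    "q' \<in> Cm" "p' \<in> Cp" "Cod C q' = Dom C p'" "Comp C p' q' = f"
  from factD a(1) have "\<exists>!pq. fst pq \<in> Cm \<and> snd pq \<in> Cp \<and> Cod C (fst pq) = Dom C (snd pq) \<and>
                      Comp C (snd pq) (fst pq) = f" by blast
  then have "(q, p) = (q', p')" using a by (metis fst_conv snd_conv)
  then show ?thesis by simp
qed

lemma L1:
  assumes q: "q \<in> Cm" and q': "q' \<in> Cm" and c: "Cod C q = Dom C q'"
    and e: "Comp C q' q = Id C (Dom C q)"
  shows "q = Id C (Dom C q)"
proof (rule ccontr)
  assume ne: "q \<noteq> Id C (Dom C q)"
  have qa: "q \<in> Arr C" "q' \<in> Arr C" using q q' Cm_arr by auto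
  define a where "a = Dom C q"
  define b where "b = Cod C q"
  have ao: "a \<in> Obj C" "b \<in> Obj C" using qa arr_dom arr_cod a_def b_def by auto
  have "Cod C (Comp C q' q) = Cod C q'" using comp_cod qa c by auto
  then have cq': "Cod C q' = a" using e ao a_def by simp
  have wf: "wf (reedy_rel C Cm Cp)" using R reedy_def by auto
  have r1: "(b, a) \<in> reedy_rel C Cm Cp"
    unfolding reedy_rel_def using ao q ne a_def b_def by auto
  show False
  proof (cases "q' = Id C b")
    case True
    then have "a = b" using cq' ao by simp
    then have "Comp C q' q = q" using True idl qa b_def by auto
    then show False using e ne by simp
  next
    case False
    have "(a, b) \<in> reedy_rel C Cm Cp"
      unfolding reedy_rel_def using ao q' False cq' c b_def by auto
    then show False using r1 wf wf_not_sym by metis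
  qed
qed

lemma L2:
  assumes h: "h \<in> Arr C" and w: "w \<in> Cm" and c: "Cod C w = Dom C h"
    and hw: "Comp C h w \<in> Cp"
  shows "w = Id C (Dom C w) \<and> h \<in> Cp"
proof -
  obtain q p where qp: "q \<in> Cm" "p \<in> Cp" "Cod C q = Dom C p" "Comp C p q = h"
    using fact_ex h by blast
  have wa: "w \<in> Arr C" using w Cm_arr by auto
  have pa: "p \<in> Arr C" "q \<in> Arr C" using qp Cp_arr Cm_arr by auto
  define a where "a = Dom C w"
  have ao: "a \<in> Obj C" using wa arr_dom a_def by auto
  have hwa: "Comp C h w \<in> Arr C" using comp_arr h wa c by auto
  have dhw: "Dom C (Comp C h w) = a" using comp_dom h wa c a_def by auto
  have dq: "Dom C q = Cod C w"
    using c qp pa comp_dom by metis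
  have e1: "Comp C (Comp C h w) (Id C a) = Comp C h w" using idr hwa dhw by auto
  have e2: "Comp C p (Comp C q w) = Comp C h w" using assoc[OF wa pa(2) pa(1)] dq qp by auto
  have qw: "Comp C q w \<in> Cm" using Cm_comp w qp dq by auto
  have cqw: "Cod C (Comp C q w) = Dom C p" using comp_cod wa pa dq qp by auto
  have u: "Comp C q w = Id C a \<and> p = Comp C h w"
    using fact_uniq[OF hwa qw qp(2) cqw e2 Cm_id[OF ao] hw] ao dhw e1 by auto
  have wid: "w = Id C a" using L1[OF w qp(1) dq[symmetric]] u a_def by auto
  have "Dom C q = a" using dq wid ao by simp
  then have "q = Id C a" using u wid idr pa by metis
  then have "h = p" using qp idr pa by (metis id_cod ao)
  then show ?thesis using wid qp a_def by auto
qed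


lemma nerve_arr: "nerve_obj C n Y \<Longrightarrow> i \<le> j \<Longrightarrow> j \<le> n \<Longrightarrow> Y i j \<in> Arr C"
  unfolding nerve_obj_def by blast
lemma nerve_dom: "nerve_obj C n Y \<Longrightarrow> i \<le> j \<Longrightarrow> j \<le> n \<Longrightarrow> Dom C (Y i j) = nobj C Y i"
  unfolding nerve_obj_def by blast
lemma nerve_cod: "nerve_obj C n Y \<Longrightarrow> i \<le> j \<Longrightarrow> j \<le> n \<Longrightarrow> Cod C (Y i j) = nobj C Y j"
  unfolding nerve_obj_def by blast
lemma nerve_obj: "nerve_obj C n Y \<Longrightarrow> i \<le> n \<Longrightarrow> nobj C Y i \<in> Obj C"
  unfolding nerve_obj_def by blast
lemma nerve_id: "nerve_obj C n Y \<Longrightarrow> i \<le> n \<Longrightarrow> Y i i = Id C (nobj C Y i)"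
  unfolding nerve_obj_def by blast
lemma nerve_comp: "nerve_obj C n Y \<Longrightarrow> i \<le> j \<Longrightarrow> j \<le> k \<Longrightarrow> k \<le> n \<Longrightarrow> Y i k = Comp C (Y j k) (Y i j)"
  unfolding nerve_obj_def by blast

lemma nerve_comp2:
  assumes "nerve_obj C n Y" "i \<le> j" "j \<le> k" "k \<le> n" "t \<in> Arr C" "Cod C t = nobj C Y i"
  shows "Comp C (Y j k) (Comp C (Y i j) t) = Comp C (Y i k) t"
proof -
  have "Comp C (Y j k) (Comp C (Y i j) t) = Comp C (Comp C (Y j k) (Y i j)) t"
  proof (rule assoc)
    have jn: "j \<le> n" using assms by linarith
    show "t \<in> Arr C" by (rule assms(5))
    show "Y i j \<in> Arr C" using nerve_arr[OF assms(1) assms(2) jn] .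
    show "Y j k \<in> Arr C" using nerve_arr[OF assms(1) assms(3) assms(4)] .
    show "Cod C t = Dom C (Y i j)" using nerve_dom[OF assms(1) assms(2) jn] assms(6) by simp
    show "Cod C (Y i j) = Dom C (Y j k)" using nerve_dom[OF assms(1) assms(3) assms(4)]
       nerve_cod[OF assms(1) assms(2) jn] by simp
  qed
  also have "\<dots> = Comp C (Y i k) t" using nerve_comp[OF assms(1-4)] by simp
  finally show ?thesis .
qed

lemma nerve_idl:
  assumes "nerve_obj C n Y" "i \<le> n" "t \<in> Arr C" "Cod C t = nobj C Y i"
  shows "Comp C (Y i i) t = t"
  using nerve_id[OF assms(1,2)] idl[OF assms(3) assms(4)[symmetric]] by simp

lemma homD:
  assumes "(a,t) \<in> gamma_hom G C Cm Cp (m,X) (n,Y)"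
  shows "gamma_obj G C Cm Cp (m,X)" "gamma_obj G C Cm Cp (n,Y)" "nerve_obj C m X" "nerve_obj C n Y"
  "\<And>i. i \<le> m \<Longrightarrow> a i \<le> n" "\<And>i j. i \<le> j \<Longrightarrow> j \<le> m \<Longrightarrow> a i \<le> a j"
  "\<And>i. i > m \<Longrightarrow> a i = undefined" "\<And>i. i > m \<Longrightarrow> t i = undefined"
  "\<And>i. i \<le> m \<Longrightarrow> t i \<in> Arr C" "\<And>i. i \<le> m \<Longrightarrow> Dom C (t i) = nobj C X i"
  "\<And>i. i \<le> m \<Longrightarrow> Cod C (t i) = nobj C Y (a i)"
  "\<And>i j. i \<le> j \<Longrightarrow> j \<le> m \<Longrightarrow> Comp C (t j) (X i j) = Comp C (Y (a i) (a j)) (t i)"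
  "\<And>i. G \<noteq> IntN \<Longrightarrow> i \<le> m \<Longrightarrow> t i \<in> Cp"
  "G = IntNmmp \<Longrightarrow> inj_on a {0..m}"
  "\<And>i j. G \<noteq> IntN \<Longrightarrow> i \<le> j \<Longrightarrow> j \<le> m \<Longrightarrow> X i j \<in> Cm"
  "\<And>i j. G = IntNmmp \<Longrightarrow> i \<le> j \<Longrightarrow> j \<le> m \<Longrightarrow> X i j = Id C (nobj C X i) \<Longrightarrow> i = j"
  using assms unfolding gamma_hom_def gamma_obj_def by auto

lemma homI:
  assumes "gamma_obj G C Cm Cp (m,X)" "gamma_obj G C Cm Cp (n,Y)"
  "\<And>i. i \<le> m \<Longrightarrow> a i \<le> n" "\<And>i j. i \<le> j \<Longrightarrow> j \<le> m \<Longrightarrow> a i \<le> a j"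
  "\<And>i. i > m \<Longrightarrow> a i = undefined" "\<And>i. i > m \<Longrightarrow> t i = undefined"
  "\<And>i. i \<le> m \<Longrightarrow> t i \<in> Arr C" "\<And>i. i \<le> m \<Longrightarrow> Dom C (t i) = nobj C X i"
  "\<And>i. i \<le> m \<Longrightarrow> Cod C (t i) = nobj C Y (a i)"
  "\<And>i j. i \<le> j \<Longrightarrow> j \<le> m \<Longrightarrow> Comp C (t j) (X i j) = Comp C (Y (a i) (a j)) (t i)"
  "\<And>i. G \<noteq> IntN \<Longrightarrow> i \<le> m \<Longrightarrow> t i \<in> Cp"
  "G = IntNmmp \<Longrightarrow> inj_on a {0..m}"
  shows "(a,t) \<in> gamma_hom G C Cm Cp (m,X) (n,Y)"
  using assms unfolding gamma_hom_def by auto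

lemma hom_le_pair: "hom_le C m Y (a,t) (a',t') \<longleftrightarrow>
   (\<forall>i\<le>m. a i \<le> a' i \<and> t' i = Comp C (Y (a i) (a' i)) (t i))"
  by (simp add: hom_le_def)

lemma hom_le_antisym:
  assumes "g1 \<in> gamma_hom G C Cm Cp (m,X) (n,Y)" "g2 \<in> gamma_hom G C Cm Cp (m,X) (n,Y)"
    "hom_le C m Y g1 g2" "hom_le C m Y g2 g1"
  shows "g1 = g2"
proof -
  obtain a1 t1 where g1: "g1 = (a1,t1)" by fastforce
  obtain a2 t2 where g2: "g2 = (a2,t2)" by fastforce
  note h1 = homD[OF assms(1)[unfolded g1]]
  note h2 = homD[OF assms(2)[unfolded g2]]
  have l1: "\<forall>i\<le>m. a1 i \<le> a2 i \<and> t2 i = Comp C (Y (a1 i) (a2 i)) (t1 i)"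
    using assms(3) g1 g2 hom_le_pair by auto
  have l2: "\<forall>i\<le>m. a2 i \<le> a1 i \<and> t1 i = Comp C (Y (a2 i) (a1 i)) (t2 i)"
    using assms(4) g1 g2 hom_le_pair by auto
  have "a1 = a2"
  proof
    fix i show "a1 i = a2 i"
      using l1 l2 h1(7) h2(7) by (cases "i \<le> m") force+
  qed
  moreover have "t1 = t2"
  proof
    fix i show "t1 i = t2 i"
    proof (cases "i \<le> m")
      case True
      then have "a1 i = a2 i" using l1 l2 by force
      then show ?thesis using l1 True nerve_idl[OF h1(4) h1(5) h1(9) h1(11)] by (metis True)
    next
      case False then show ?thesis using h1(8) h2(8) by simp
    qed
  qed
  ultimately show ?thesis using g1 g2 by simp
qed

lemma hom_le_trans:
  assumes "g1 \<in> gamma_hom G C Cm Cp (m,X) (n,Y)" "g2 \<in> gamma_hom G C Cm Cp (m,X) (n,Y)"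
    "g3 \<in> gamma_hom G C Cm Cp (m,X) (n,Y)"
    "hom_le C m Y g1 g2" "hom_le C m Y g2 g3"
  shows "hom_le C m Y g1 g3"
proof -
  obtain a1 t1 where g1: "g1 = (a1,t1)" by fastforce
  obtain a2 t2 where g2: "g2 = (a2,t2)" by fastforce
  obtain a3 t3 where g3: "g3 = (a3,t3)" by fastforce
  note h1 = homD[OF assms(1)[unfolded g1]]
  note h3 = homD[OF assms(3)[unfolded g3]]
  have l1: "\<forall>i\<le>m. a1 i \<le> a2 i \<and> t2 i = Comp C (Y (a1 i) (a2 i)) (t1 i)"
    using assms(4) g1 g2 hom_le_pair by auto
  have l2: "\<forall>i\<le>m. a2 i \<le> a3 i \<and> t3 i = Comp C (Y (a2 i) (a3 i)) (t2 i)"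
    using assms(5) g3 g2 hom_le_pair by auto
  have "\<forall>i\<le>m. a1 i \<le> a3 i \<and> t3 i = Comp C (Y (a1 i) (a3 i)) (t1 i)"
  proof (intro allI impI conjI)
    fix i assume i: "i \<le> m"
    show "a1 i \<le> a3 i" using l1 l2 i by force
    have "t3 i = Comp C (Y (a2 i) (a3 i)) (Comp C (Y (a1 i) (a2 i)) (t1 i))" using l1 l2 i by auto
    also have "\<dots> = Comp C (Y (a1 i) (a3 i)) (t1 i)"
      using nerve_comp2[OF h1(4), of "a1 i" "a2 i" "a3 i" "t1 i"] l1 l2 i h3(5) h1(9) h1(11) by auto
    finally show "t3 i = Comp C (Y (a1 i) (a3 i)) (t1 i)" .
  qed
  then show ?thesis using g1 g3 hom_le_pair by simp
qed


lemma largest_ex: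
  assumes f: "(\<alpha>,\<theta>) \<in> gamma_hom G C Cm Cp (m,X) (n,Y)"
  shows "\<exists>g. is_largest_above C m Y (gamma_hom G C Cm Cp (m,X) (n,Y)) (\<alpha>,\<theta>) g"
proof -
  note h = homD[OF f]
  define P where "P i k \<longleftrightarrow> \<alpha> i \<le> k \<and> k \<le> n \<and> (G \<noteq> IntN \<longrightarrow> Comp C (Y (\<alpha> i) k) (\<theta> i) \<in> Cp)"
    for i k
  define \<beta> where "\<beta> i = (if i \<le> m then Max {k. P i k} else undefined)" for i
  define \<theta>' where "\<theta>' i = (if i \<le> m then Comp C (Y (\<alpha> i) (\<beta> i)) (\<theta> i) else undefined)" for i
  have P0: "P i (\<alpha> i)" if "i \<le> m" for i
    using nerve_idl[OF h(4) h(5)[OF that] h(9)[OF that] h(11)[OF that]] h(13)[OF _ that] h(5)[OF that]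
    unfolding P_def by auto
  have fin: "finite {k. P i k}" for i by (rule finite_subset[of _ "{..n}"]) (auto simp: P_def)
  have Pb: "P i (\<beta> i)" if "i \<le> m" for i
  proof -
    have "{k. P i k} \<noteq> {}" using P0[OF that] by blast
    then show ?thesis using Max_in[OF fin] that unfolding \<beta>_def by auto
  qed
  have Pmax: "k \<le> \<beta> i" if "i \<le> m" "P i k" for i k using Max_ge[OF fin] that \<beta>_def by auto
  have ab: "\<alpha> i \<le> \<beta> i" "\<beta> i \<le> n" if "i \<le> m" for i using Pb[OF that] P_def by auto
  have th'_eq: "\<theta>' i = Comp C (Y (\<alpha> i) (\<beta> i)) (\<theta> i)" if "i \<le> m" for i using that \<theta>'_def by simp
  have Yarr: "Y a b \<in> Arr C" "Dom C (Y a b) = nobj C Y a" "Cod C (Y a b) = nobj C Y b"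
    if "a \<le> b" "b \<le> n" for a b
    using nerve_arr[OF h(4) that] nerve_dom[OF h(4) that] nerve_cod[OF h(4) that] by auto
  have Xarr: "X a b \<in> Arr C" "Dom C (X a b) = nobj C X a" "Cod C (X a b) = nobj C X b"
    if "a \<le> b" "b \<le> m" for a b
    using nerve_arr[OF h(3) that] nerve_dom[OF h(3) that] nerve_cod[OF h(3) that] by auto
  have Yt: "Comp C (Y (\<alpha> i) k) (\<theta> i) \<in> Arr C" "Dom C (Comp C (Y (\<alpha> i) k) (\<theta> i)) = nobj C X i"
     "Cod C (Comp C (Y (\<alpha> i) k) (\<theta> i)) = nobj C Y k"
    if "i \<le> m" "\<alpha> i \<le> k" "k \<le> n" for i k
  proof -
    have c: "Cod C (\<theta> i) = Dom C (Y (\<alpha> i) k)" using h(11)[OF that(1)] Yarr[OF that(2,3)] by simp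
    show "Comp C (Y (\<alpha> i) k) (\<theta> i) \<in> Arr C" using comp_arr[OF h(9)[OF that(1)] Yarr(1)[OF that(2,3)] c] .
    show "Dom C (Comp C (Y (\<alpha> i) k) (\<theta> i)) = nobj C X i"
      using comp_dom[OF h(9)[OF that(1)] Yarr(1)[OF that(2,3)] c] h(10)[OF that(1)] by simp
    show "Cod C (Comp C (Y (\<alpha> i) k) (\<theta> i)) = nobj C Y k"
      using comp_cod[OF h(9)[OF that(1)] Yarr(1)[OF that(2,3)] c] Yarr(3)[OF that(2,3)] by simp
  qed
  have key: "Comp C (Comp C (Y (\<alpha> j) k) (\<theta> j)) (X i j) = Comp C (Y (\<alpha> i) k) (\<theta> i)"
    if "i \<le> j" "j \<le> m" "\<alpha> j \<le> k" "k \<le> n" for i j k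
  proof -
    have im: "i \<le> m" using that by linarith
    have "Comp C (Comp C (Y (\<alpha> j) k) (\<theta> j)) (X i j) = Comp C (Y (\<alpha> j) k) (Comp C (\<theta> j) (X i j))"
      using assoc[OF Xarr(1)[OF that(1,2)] h(9)[OF that(2)] Yarr(1)[OF that(3,4)]]
        Xarr(3)[OF that(1,2)] h(10)[OF that(2)] h(11)[OF that(2)] Yarr(2)[OF that(3,4)] by simp
    also have "\<dots> = Comp C (Y (\<alpha> j) k) (Comp C (Y (\<alpha> i) (\<alpha> j)) (\<theta> i))" using h(12)[OF that(1,2)] by simp
    also have "\<dots> = Comp C (Y (\<alpha> i) k) (\<theta> i)"
      using nerve_comp2[OF h(4) h(6)[OF that(1,2)] that(3,4) h(9)[OF im] h(11)[OF im]] .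
    finally show ?thesis .
  qed
  have mono: "\<beta> i \<le> \<beta> j" if ij: "i \<le> j" "j \<le> m" for i j
  proof (cases "\<beta> i < \<alpha> j")
    case True then show ?thesis using ab(1)[OF ij(2)] by linarith
  next
    case False
    have im: "i \<le> m" using ij by linarith
    have "P j (\<beta> i)"
      unfolding P_def
    proof (intro conjI impI)
      show "\<alpha> j \<le> \<beta> i" using False by linarith
      show "\<beta> i \<le> n" using ab(2)[OF im] .
      assume G: "G \<noteq> IntN"
      have hc: "Comp C (Comp C (Y (\<alpha> j) (\<beta> i)) (\<theta> j)) (X i j) \<in> Cp"
        using key[OF ij, of "\<beta> i"] False ab(2)[OF im] Pb[OF im] G unfolding P_def by auto
      show "Comp C (Y (\<alpha> j) (\<beta> i)) (\<theta> j) \<in> Cp"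
        using L2[OF Yt(1)[OF ij(2), of "\<beta> i"] h(15)[OF G ij] _ hc] False ab(2)[OF im]
          Xarr(3)[OF ij] Yt(2)[OF ij(2), of "\<beta> i"] by auto
    qed
    then show ?thesis using Pmax ij by auto
  qed
  have th'_arr: "\<theta>' i \<in> Arr C" "Dom C (\<theta>' i) = nobj C X i" "Cod C (\<theta>' i) = nobj C Y (\<beta> i)"
    if "i \<le> m" for i
    using Yt[OF that ab[OF that]] th'_eq[OF that] by auto
  have th'_Cp: "\<theta>' i \<in> Cp" if "G \<noteq> IntN" "i \<le> m" for i
    using Pb[OF that(2)] that th'_eq unfolding P_def by auto
  have nat: "Comp C (\<theta>' j) (X i j) = Comp C (Y (\<beta> i) (\<beta> j)) (\<theta>' i)" if ij: "i \<le> j" "j \<le> m" for i j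
  proof -
    have im: "i \<le> m" using ij by linarith
    have "Comp C (\<theta>' j) (X i j) = Comp C (Y (\<alpha> i) (\<beta> j)) (\<theta> i)"
      using key[OF ij ab[OF ij(2)]] th'_eq[OF ij(2)] by simp
    also have "\<dots> = Comp C (Y (\<beta> i) (\<beta> j)) (\<theta>' i)"
      using nerve_comp2[OF h(4) ab(1)[OF im] mono[OF ij] ab(2)[OF ij(2)] h(9)[OF im] h(11)[OF im]]
        th'_eq[OF im] by simp
    finally show ?thesis .
  qed
  have ne: "\<beta> i \<noteq> \<beta> j" if G: "G = IntNmmp" and ij: "i < j" "j \<le> m" for i j
  proof
    assume eq: "\<beta> i = \<beta> j"
    have im: "i \<le> m" using ij by linarith
    have G': "G \<noteq> IntN" using G by simp
    have "Comp C (\<theta>' j) (X i j) = \<theta>' i"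
      using nat[of i j] ij eq nerve_idl[OF h(4) ab(2)[OF im] th'_arr(1,3)[OF im]] by simp
    then have "Comp C (\<theta>' j) (X i j) \<in> Cp" using th'_Cp[OF G' im] by simp
    then have "X i j = Id C (Dom C (X i j))"
      using L2[OF th'_arr(1)[OF ij(2)] h(15)[OF G'] ] ij Xarr(3)[of i j] th'_arr(2)[OF ij(2)] by auto
    then have "i = j" using h(16)[OF G, of i j] ij Xarr(2)[of i j] by auto
    then show False using ij by simp
  qed
  have gH: "(\<beta>, \<theta>') \<in> gamma_hom G C Cm Cp (m,X) (n,Y)"
  proof (rule homI[OF h(1) h(2)])
    show "G = IntNmmp \<Longrightarrow> inj_on \<beta> {0..m}"
    proof -
      assume G: "G = IntNmmp"
      show "inj_on \<beta> {0..m}"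
      proof (rule inj_onI)
        fix x y assume "x \<in> {0..m}" "y \<in> {0..m}" "\<beta> x = \<beta> y"
        then show "x = y" using ne[OF G, of x y] ne[OF G, of y x] by (cases x y rule: linorder_cases) auto
      qed
    qed
  qed (use ab mono th'_arr th'_Cp nat \<beta>_def \<theta>'_def in auto)
  have le1: "hom_le C m Y (\<alpha>,\<theta>) (\<beta>,\<theta>')" using ab th'_eq hom_le_pair by auto
  have le2: "hom_le C m Y \<psi> (\<beta>,\<theta>')"
    if psi: "\<psi> \<in> gamma_hom G C Cm Cp (m,X) (n,Y)" "hom_le C m Y (\<alpha>,\<theta>) \<psi>" for \<psi>
  proof -
    obtain a2 t2 where p: "\<psi> = (a2,t2)" by fastforce
    note h2 = homD[OF psi(1)[unfolded p]]
    have l: "\<forall>i\<le>m. \<alpha> i \<le> a2 i \<and> t2 i = Comp C (Y (\<alpha> i) (a2 i)) (\<theta> i)"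
      using psi(2) p hom_le_pair by auto
    have "\<forall>i\<le>m. a2 i \<le> \<beta> i \<and> \<theta>' i = Comp C (Y (a2 i) (\<beta> i)) (t2 i)"
    proof (intro allI impI conjI)
      fix i assume i: "i \<le> m"
      have "P i (a2 i)" unfolding P_def using l i h2(5)[OF i] h2(13)[OF _ i] by auto
      then show a: "a2 i \<le> \<beta> i" using Pmax i by auto
      show "\<theta>' i = Comp C (Y (a2 i) (\<beta> i)) (t2 i)"
        using nerve_comp2[OF h(4), of "\<alpha> i" "a2 i" "\<beta> i" "\<theta> i"] l i a ab[OF i] h(9)[OF i] h(11)[OF i]
          th'_eq[OF i] by auto
    qed
    then show ?thesis using p hom_le_pair by simp
  qed
  show ?thesis unfolding is_largest_above_def using gH le1 le2 by blast
qed


lemma largest_ex':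
  assumes "f \<in> gamma_hom G C Cm Cp (m,X) (n,Y)"
  shows "\<exists>g. is_largest_above C m Y (gamma_hom G C Cm Cp (m,X) (n,Y)) f g"
  using largest_ex[of "fst f" "snd f"] assms by simp

lemma largest_unique:
  assumes "is_largest_above C m Y (gamma_hom G C Cm Cp (m,X) (n,Y)) f g"
  shows "largest_above C m Y (gamma_hom G C Cm Cp (m,X) (n,Y)) f = g"
proof -
  have "\<And>g'. is_largest_above C m Y (gamma_hom G C Cm Cp (m,X) (n,Y)) f g' \<Longrightarrow> g' = g"
    using assms hom_le_antisym unfolding is_largest_above_def by metis
  then show ?thesis unfolding largest_above_def using assms by (rule the_equality[rotated])
qed

lemma largest_the:
  assumes "f \<in> gamma_hom G C Cm Cp (m,X) (n,Y)"
  shows "is_largest_above C m Y (gamma_hom G C Cm Cp (m,X) (n,Y)) f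
           (largest_above C m Y (gamma_hom G C Cm Cp (m,X) (n,Y)) f)"
proof -
  obtain g where g: "is_largest_above C m Y (gamma_hom G C Cm Cp (m,X) (n,Y)) f g"
    using largest_ex'[OF assms] by blast
  show ?thesis using largest_unique[OF g] g by simp
qed

lemma top_inv:
  assumes "g \<in> gamma_hom G C Cm Cp (m,X) (n,Y)" "h \<in> gamma_hom G C Cm Cp (m,X) (n,Y)"
    "hom_le C m Y g h"
  shows "largest_above C m Y (gamma_hom G C Cm Cp (m,X) (n,Y)) h
       = largest_above C m Y (gamma_hom G C Cm Cp (m,X) (n,Y)) g"
proof (rule largest_unique)
  let ?H = "gamma_hom G C Cm Cp (m,X) (n,Y)"
  let ?t = "largest_above C m Y ?H g"
  have t: "is_largest_above C m Y ?H g ?t" using largest_the[OF assms(1)] .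
  show "is_largest_above C m Y ?H h ?t"
    unfolding is_largest_above_def
  proof (intro conjI ballI impI)
    show "?t \<in> ?H" using t is_largest_above_def by blast
    show "hom_le C m Y h ?t" using t assms unfolding is_largest_above_def by blast
    fix \<psi> assume "\<psi> \<in> ?H" "hom_le C m Y h \<psi>"
    then have "hom_le C m Y g \<psi>" using hom_le_trans assms by blast
    then show "hom_le C m Y \<psi> ?t" using t \<open>\<psi> \<in> ?H\<close> unfolding is_largest_above_def by blast
  qed
qed

end

theorem proposition4p6:
  fixes C :: "('o, 'm) cat" and Cm Cp :: "'m set" and G :: gamma
    and m n :: nat and X Y :: "nat \<Rightarrow> nat \<Rightarrow> 'm"
    and f f' :: "(nat \<Rightarrow> nat) \<times> (nat \<Rightarrow> 'm)"
  defines "H \<equiv> gamma_hom G C Cm Cp (m, X) (n, Y)"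
  assumes "reedy C Cm Cp"
    and "f \<in> H" and "f' \<in> H"
  shows "(\<exists>g. is_largest_above C m Y H f g) \<and> (\<exists>g. is_largest_above C m Y H f' g) \<and>
    (hom_equiv C m Y H f f' \<longleftrightarrow> common_ub C m Y H f f') \<and>
    (common_ub C m Y H f f' \<longleftrightarrow> largest_above C m Y H f = largest_above C m Y H f')"
proof -
  interpret reedy_loc C Cm Cp using assms(2) by unfold_locales
  note f1 = assms(3)[unfolded H_def]
  note f2 = assms(4)[unfolded H_def]
  have l1: "\<exists>g. is_largest_above C m Y H f g" unfolding H_def by (rule largest_ex'[OF f1])
  have l2: "\<exists>g. is_largest_above C m Y H f' g" unfolding H_def by (rule largest_ex'[OF f2])
  have e2t: "largest_above C m Y H f = largest_above C m Y H f'" if "hom_equiv C m Y H f f'"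
  proof -
    have "equivclp (\<lambda>g h. g \<in> H \<and> h \<in> H \<and> hom_le C m Y g h) f f'"
      using that unfolding hom_equiv_def .
    then have "f' \<in> H \<and> largest_above C m Y H f' = largest_above C m Y H f"
    proof (induct rule: equivclp_induct)
      case base then show ?case using assms(3) by simp
    next
      case (step y z)
      from step(2) have "y \<in> H \<and> z \<in> H \<and> (hom_le C m Y y z \<or> hom_le C m Y z y)" by blast
      then have "z \<in> H \<and> largest_above C m Y H z = largest_above C m Y H y"
        using top_inv[of y G m X n Y z] top_inv[of z G m X n Y y] unfolding H_def by metis
      then show ?case using step(3) by simp
    qed
    then show ?thesis by simp
  qed
  have t2c: "common_ub C m Y H f f'" if "largest_above C m Y H f = largest_above C m Y H f'"
  proof -
    have a: "is_largest_above C m Y H f (largest_above C m Y H f)"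
      unfolding H_def by (rule largest_the[OF f1])
    have b0: "is_largest_above C m Y H f' (largest_above C m Y H f')"
      unfolding H_def by (rule largest_the[OF f2])
    have b: "is_largest_above C m Y H f' (largest_above C m Y H f)"
      using b0 by (simp only: that)
    show ?thesis using a b unfolding common_ub_def is_largest_above_def by blast
  qed
  have c2e: "hom_equiv C m Y H f f'" if cu: "common_ub C m Y H f f'"
  proof -
    obtain g where g: "g \<in> H" "hom_le C m Y f g" "hom_le C m Y f' g"
      using cu unfolding common_ub_def by blast
    let ?r = "\<lambda>g h. g \<in> H \<and> h \<in> H \<and> hom_le C m Y g h"
    have r1: "?r f g" using g assms(3) by blast
    have r2: "?r f' g" using g assms(4) by blast
    have "equivclp ?r f g" by (rule r_into_equivclp[of ?r, OF r1])
    moreover have "equivclp ?r g f'" by (rule equivclp_sym[OF r_into_equivclp[of ?r, OF r2]])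
    ultimately show ?thesis unfolding hom_equiv_def by (rule equivclp_trans)
  qed
  show ?thesis using l1 l2 e2t t2c c2e by blast
qed

end
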